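(* Let $X_0,X_1,\ldots$ be i.i.d. real random variables with $\mathbb{E} X_0^2<\infty$ and $\mathbb{E} X_0=m$, and let $T_n$ be the associated random Toeplitz matrices. Then $$\lim_{n\to\infty}\frac{\|T_n\|}{n}=|m|\quad\text{almost surely.}$$
   Context: For a sequence of real random variables $X_0,X_1,\ldots$, the random symmetric Toeplitz matrix is $T_n=[X_{|i-j|}]_{1\le i,j\le n}$ and $\|T_n\|$ denotes its operator norm on $\ell_2^n$. *)

theory Defs
  imports "HOL-Probability.Probability"
begin

text \<open>Operator norm on the Euclidean space l2^n of the n x n real matrix with entries
  A i j, 0 \<le> i, j < n (indices shifted by one relative to the paper's 1..n).\<close>
definition mat_opnorm :: "nat \<Rightarrow> (nat \<Rightarrow> nat \<Rightarrow> real) \<Rightarrow> real" where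
  "mat_opnorm n A =
     Sup {sqrt (\<Sum>i<n. (\<Sum>j<n. A i j * x j)\<^sup>2) | x :: nat \<Rightarrow> real. (\<Sum>j<n. (x j)\<^sup>2) \<le> 1}"

definition toeplitz :: "(nat \<Rightarrow> real) \<Rightarrow> nat \<Rightarrow> nat \<Rightarrow> real" where
  "toeplitz a i j = a (nat \<bar>int i - int j\<bar>)"

end

theory Submission
  imports Defs "HOL-Library.Discrete_Functions"
begin


definition qf :: "nat \<Rightarrow> (nat \<Rightarrow> nat \<Rightarrow> real) \<Rightarrow> (nat \<Rightarrow> real) \<Rightarrow> real" where
  "qf n A x = sqrt (\<Sum>i<n. (\<Sum>j<n. A i j * x j)\<^sup>2)"

definition GG :: "nat \<Rightarrow> (nat \<Rightarrow> nat \<Rightarrow> real) \<Rightarrow> real" where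
  "GG n A = (\<Sum>j<n. \<Sum>l<n. (\<Sum>i<n. A i j * A i l)\<^sup>2)"

lemma qf_nonneg: "0 \<le> qf n A x" unfolding qf_def by (simp add: sum_nonneg)

lemma GG_nonneg: "0 \<le> GG n A" unfolding GG_def by (intro sum_nonneg) auto

lemma qf4: assumes "(\<Sum>j<n. (x j)\<^sup>2) \<le> 1"
  shows "(qf n A x)^4 \<le> GG n A"
proof -
  let ?I = "{..<n} \<times> {..<n}"
  have q2: "(qf n A x)\<^sup>2 = (\<Sum>p\<in>?I. (x (fst p) * x (snd p)) * (\<Sum>i<n. A i (fst p) * A i (snd p)))"
  proof -
    have "(qf n A x)\<^sup>2 = (\<Sum>i<n. (\<Sum>j<n. A i j * x j)\<^sup>2)"
      unfolding qf_def by (simp add: sum_nonneg)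
    also have "\<dots> = (\<Sum>i<n. \<Sum>j<n. \<Sum>l<n. (A i j * x j) * (A i l * x l))"
      by (simp add: power2_eq_square sum_product)
    also have "\<dots> = (\<Sum>j<n. \<Sum>l<n. \<Sum>i<n. (A i j * x j) * (A i l * x l))"
      by (subst sum.swap, subst (2) sum.swap, simp)
    also have "\<dots> = (\<Sum>j<n. \<Sum>l<n. (x j * x l) * (\<Sum>i<n. A i j * A i l))"
      by (simp add: sum_distrib_left algebra_simps)
    also have "\<dots> = (\<Sum>p\<in>?I. (x (fst p) * x (snd p)) * (\<Sum>i<n. A i (fst p) * A i (snd p)))"
      by (simp add: sum.cartesian_product split_def)
    finally show ?thesis .
  qed
  have cs: "((qf n A x)\<^sup>2)\<^sup>2 \<le> (\<Sum>p\<in>?I. (x (fst p) * x (snd p))\<^sup>2) * (\<Sum>p\<in>?I. (\<Sum>i<n. A i (fst p) * A i (snd p))\<^sup>2)"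
    unfolding q2 by (rule Cauchy_Schwarz_ineq_sum)
  have e1: "(\<Sum>p\<in>?I. (x (fst p) * x (snd p))\<^sup>2) = (\<Sum>j<n. (x j)\<^sup>2)\<^sup>2"
  proof -
    have "(\<Sum>p\<in>?I. (x (fst p) * x (snd p))\<^sup>2) = (\<Sum>j<n. \<Sum>l<n. (x j)\<^sup>2 * (x l)\<^sup>2)"
      by (simp add: sum.cartesian_product split_def power_mult_distrib)
    also have "\<dots> = (\<Sum>j<n. (x j)\<^sup>2)\<^sup>2"
      by (simp add: power2_eq_square[of "sum _ _"] sum_product)
    finally show ?thesis .
  qed
  have e2: "(\<Sum>p\<in>?I. (\<Sum>i<n. A i (fst p) * A i (snd p))\<^sup>2) = GG n A"
    unfolding GG_def by (simp add: sum.cartesian_product split_def)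
  have s0: "0 \<le> (\<Sum>j<n. (x j)\<^sup>2)" by (intro sum_nonneg) auto
  have "(\<Sum>j<n. (x j)\<^sup>2)\<^sup>2 \<le> 1" using assms s0 by (simp add: power_le_one)
  hence "(\<Sum>j<n. (x j)\<^sup>2)\<^sup>2 * GG n A \<le> GG n A"
    using GG_nonneg[of n A] by (simp add: mult_left_le_one_le s0)
  moreover have "(qf n A x)^4 = ((qf n A x)\<^sup>2)\<^sup>2" by simp
  ultimately show ?thesis using cs e1 e2 by simp
qed

definition ball1 :: "nat \<Rightarrow> (nat \<Rightarrow> real) set" where
  "ball1 n = {x. (\<Sum>j<n. (x j)\<^sup>2) \<le> 1}"

lemma opn_eq: "mat_opnorm n A = Sup (qf n A ` ball1 n)"
  unfolding mat_opnorm_def qf_def ball1_def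
  by (rule arg_cong[where f=Sup]) auto

lemma ball1_ne: "ball1 n \<noteq> {}"
proof -
  have "(\<lambda>_. 0) \<in> ball1 n" by (simp add: ball1_def)
  then show ?thesis by blast
qed

lemma qf_le_root: "x \<in> ball1 n \<Longrightarrow> qf n A x \<le> sqrt (sqrt (GG n A))"
proof -
  assume "x \<in> ball1 n"
  then have h: "(qf n A x)^4 \<le> GG n A" using qf4 ball1_def by auto
  have "(sqrt (sqrt (GG n A)))^4 = ((sqrt (sqrt (GG n A)))\<^sup>2)\<^sup>2"
    by (simp flip: power_mult)
  also have "\<dots> = GG n A" using GG_nonneg[of n A] by simp
  finally have e: "(sqrt (sqrt (GG n A)))^4 = GG n A" .
  show ?thesis using h e qf_nonneg[of n A x] power_mono_iff[of "qf n A x" "sqrt (sqrt (GG n A))" 4]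
    by (simp add: GG_nonneg)
qed

lemma bdd: "bdd_above (qf n A ` ball1 n)"
  using qf_le_root by (intro bdd_aboveI2) auto

lemma qf_le_opn: "x \<in> ball1 n \<Longrightarrow> qf n A x \<le> mat_opnorm n A"
  unfolding opn_eq by (rule cSup_upper) (use bdd in auto)

lemma opn_le: "(\<And>x. x \<in> ball1 n \<Longrightarrow> qf n A x \<le> c) \<Longrightarrow> mat_opnorm n A \<le> c"
  unfolding opn_eq by (rule cSup_least) (use ball1_ne in auto)

lemma opn_nonneg: "0 \<le> mat_opnorm n A"
proof -
  have "(\<lambda>_. 0) \<in> ball1 n" unfolding ball1_def by simp
  then show ?thesis using qf_le_opn qf_nonneg order_trans by blast
qed

lemma opn_GG: assumes "GG n A \<le> t^4" "0 \<le> t" shows "mat_opnorm n A \<le> t"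
proof (rule opn_le)
  fix x assume x: "x \<in> ball1 n"
  then have "(qf n A x)^4 \<le> t^4" using qf4[where n=n and x=x and A=A] assms(1) unfolding ball1_def by simp
  then show "qf n A x \<le> t" using assms(2) qf_nonneg[of n A x] power_mono_iff[of "qf n A x" t 4] by simp
qed

lemma opn_mono: assumes "n \<le> n'" shows "mat_opnorm n A \<le> mat_opnorm n' A"
proof (rule opn_le)
  fix x assume x: "x \<in> ball1 n"
  define x' where "x' j = (if j < n then x j else 0)" for j
  have "(\<Sum>j<n'. (x' j)\<^sup>2) = (\<Sum>j<n. (x j)\<^sup>2)"
  proof -
    have "(\<Sum>j<n'. (x' j)\<^sup>2) = (\<Sum>j<n. (x' j)\<^sup>2)"
      using assms by (intro sum.mono_neutral_right) (auto simp: x'_def)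
    then show ?thesis by (simp add: x'_def)
  qed
  then have x': "x' \<in> ball1 n'" using x by (simp add: ball1_def)
  have inner: "(\<Sum>j<n'. A i j * x' j) = (\<Sum>j<n. A i j * x j)" for i
  proof -
    have "(\<Sum>j<n'. A i j * x' j) = (\<Sum>j<n. A i j * x' j)"
      using assms by (intro sum.mono_neutral_right) (auto simp: x'_def)
    then show ?thesis by (simp add: x'_def)
  qed
  have "qf n A x \<le> qf n' A x'"
    unfolding qf_def inner using assms
    by (intro real_sqrt_le_mono sum_mono2) auto
  then show "qf n A x \<le> mat_opnorm n' A" using qf_le_opn[OF x', of A] by linarith
qed

lemma opn_add: "mat_opnorm n (\<lambda>i j. A i j + B i j) \<le> mat_opnorm n A + mat_opnorm n B"
proof (rule opn_le)
  fix x assume x: "x \<in> ball1 n"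
  have "qf n (\<lambda>i j. A i j + B i j) x \<le> qf n A x + qf n B x"
    using L2_set_triangle_ineq[of "\<lambda>i. (\<Sum>j<n. A i j * x j)" "\<lambda>i. (\<Sum>j<n. B i j * x j)" "{..<n}"]
    unfolding qf_def L2_set_def by (simp add: distrib_right sum.distrib)
  then show "qf n (\<lambda>i j. A i j + B i j) x \<le> mat_opnorm n A + mat_opnorm n B"
    using qf_le_opn[OF x, of A] qf_le_opn[OF x, of B] by linarith
qed

lemma opn_uminus: "mat_opnorm n (\<lambda>i j. - A i j) = mat_opnorm n A"
proof -
  have "qf n (\<lambda>i j. - A i j) = qf n A"
    by (rule ext) (simp add: qf_def sum_negf)
  then show ?thesis by (simp add: opn_eq)
qed

lemma opn_const: "mat_opnorm n (\<lambda>i j. c) = \<bar>c\<bar> * real n"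
proof (rule antisym)
  show "mat_opnorm n (\<lambda>i j. c) \<le> \<bar>c\<bar> * real n"
  proof (rule opn_le)
    fix x assume x: "x \<in> ball1 n"
    have cs: "(\<Sum>j<n. 1 * x j)\<^sup>2 \<le> (\<Sum>j<n. 1\<^sup>2) * (\<Sum>j<n. (x j)\<^sup>2)"
      by (rule Cauchy_Schwarz_ineq_sum)
    then have "(\<Sum>j<n. x j)\<^sup>2 \<le> real n" using x unfolding ball1_def
      by simp (meson mult_left_le order_trans of_nat_0_le_iff)
    then have "c\<^sup>2 * (\<Sum>j<n. x j)\<^sup>2 \<le> c\<^sup>2 * real n" by (rule mult_left_mono) simp
    then have "real n * (c\<^sup>2 * (\<Sum>j<n. x j)\<^sup>2) \<le> real n * (c\<^sup>2 * real n)" by (rule mult_left_mono) simp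
    then have "(\<Sum>i<n. (\<Sum>j<n. c * x j)\<^sup>2) \<le> (\<bar>c\<bar> * real n)\<^sup>2"
      by (simp add: sum_distrib_left[symmetric] power_mult_distrib power2_eq_square[of "real n"] algebra_simps)
    then have h: "sqrt (\<Sum>i<n. (\<Sum>j<n. c * x j)\<^sup>2) \<le> sqrt ((\<bar>c\<bar> * real n)\<^sup>2)"
      by (rule real_sqrt_le_mono)
    show "qf n (\<lambda>i j. c) x \<le> \<bar>c\<bar> * real n"
      unfolding qf_def using h by simp
  qed
next
  show "\<bar>c\<bar> * real n \<le> mat_opnorm n (\<lambda>i j. c)"
  proof (cases "n = 0")
    case True then show ?thesis using opn_nonneg by simp
  next
    case False
    define x where "x j = 1 / sqrt (real n)" for j :: nat
    have x: "x \<in> ball1 n" using False by (simp add: ball1_def x_def power_divide)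
    have "(\<Sum>j<n. c * x j) = c * (real n / sqrt (real n))"
      by (simp add: x_def)
    also have "\<dots> = c * sqrt (real n)" by (simp add: real_div_sqrt)
    finally have "(\<Sum>j<n. c * x j) = c * sqrt (real n)" .
    then have "qf n (\<lambda>i j. c) x = \<bar>c\<bar> * real n"
      unfolding qf_def by (simp add: power_mult_distrib real_sqrt_mult)
    then show ?thesis using qf_le_opn[OF x, of "\<lambda>i j. c"] by simp
  qed
qed

lemma row_cs: fixes A x :: "nat \<Rightarrow> real" shows "(\<Sum>j<n. A j * x j)\<^sup>2 \<le> (\<Sum>j<n. \<bar>A j\<bar>) * (\<Sum>j<n. \<bar>A j\<bar> * (x j)\<^sup>2)"
proof -
  have "\<bar>\<Sum>j<n. A j * x j\<bar> \<le> (\<Sum>j<n. sqrt \<bar>A j\<bar> * (sqrt \<bar>A j\<bar> * \<bar>x j\<bar>))"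
    by (rule order_trans[OF sum_abs]) (simp add: abs_mult flip: mult.assoc)
  then have "(\<Sum>j<n. A j * x j)\<^sup>2 \<le> (\<Sum>j<n. sqrt \<bar>A j\<bar> * (sqrt \<bar>A j\<bar> * \<bar>x j\<bar>))\<^sup>2"
    by (metis abs_ge_zero power2_abs power_mono)
  also have "\<dots> \<le> (\<Sum>j<n. (sqrt \<bar>A j\<bar>)\<^sup>2) * (\<Sum>j<n. (sqrt \<bar>A j\<bar> * \<bar>x j\<bar>)\<^sup>2)"
    by (rule Cauchy_Schwarz_ineq_sum)
  also have "\<dots> = (\<Sum>j<n. \<bar>A j\<bar>) * (\<Sum>j<n. \<bar>A j\<bar> * (x j)\<^sup>2)"
    by (simp add: power_mult_distrib)
  finally show ?thesis .
qed

lemma opn_rowsum: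
  assumes R: "0 \<le> R" and rows: "\<And>i. i < n \<Longrightarrow> (\<Sum>j<n. \<bar>A i j\<bar>) \<le> R"
    and cols: "\<And>j. j < n \<Longrightarrow> (\<Sum>i<n. \<bar>A i j\<bar>) \<le> R"
  shows "mat_opnorm n A \<le> R"
proof (rule opn_le)
  fix x assume x: "x \<in> ball1 n"
  have "(\<Sum>i<n. (\<Sum>j<n. A i j * x j)\<^sup>2) \<le> (\<Sum>i<n. R * (\<Sum>j<n. \<bar>A i j\<bar> * (x j)\<^sup>2))"
  proof (rule sum_mono)
    fix i assume i: "i \<in> {..<n}"
    have "(\<Sum>j<n. A i j * x j)\<^sup>2 \<le> (\<Sum>j<n. \<bar>A i j\<bar>) * (\<Sum>j<n. \<bar>A i j\<bar> * (x j)\<^sup>2)"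
      by (rule row_cs)
    also have "\<dots> \<le> R * (\<Sum>j<n. \<bar>A i j\<bar> * (x j)\<^sup>2)"
      using rows i by (intro mult_right_mono sum_nonneg) auto
    finally show "(\<Sum>j<n. A i j * x j)\<^sup>2 \<le> R * (\<Sum>j<n. \<bar>A i j\<bar> * (x j)\<^sup>2)" .
  qed
  also have "\<dots> = R * (\<Sum>j<n. (x j)\<^sup>2 * (\<Sum>i<n. \<bar>A i j\<bar>))"
  proof -
    have "(\<Sum>i<n. \<Sum>j<n. \<bar>A i j\<bar> * (x j)\<^sup>2) = (\<Sum>j<n. (x j)\<^sup>2 * (\<Sum>i<n. \<bar>A i j\<bar>))"
      by (subst sum.swap) (simp add: sum_distrib_left mult_ac)
    then show ?thesis by (simp add: sum_distrib_left[symmetric])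
  qed
  also have "\<dots> \<le> R * (\<Sum>j<n. (x j)\<^sup>2 * R)"
    using cols R by (intro mult_left_mono sum_mono) auto
  also have "\<dots> = R * R * (\<Sum>j<n. (x j)\<^sup>2)"
    by (simp add: sum_distrib_right sum_distrib_left mult_ac)
  also have "\<dots> \<le> R * R" using x R unfolding ball1_def
    by (simp add: mult_left_le)
  finally have "(\<Sum>i<n. (\<Sum>j<n. A i j * x j)\<^sup>2) \<le> R\<^sup>2" by (simp add: power2_eq_square)
  then show "qf n A x \<le> R" unfolding qf_def using real_sqrt_le_mono R by fastforce
qed

lemma toep_sum:
  fixes f :: "nat \<Rightarrow> real"
  assumes f: "\<And>k. 0 \<le> f k" and i: "i < n"
  shows "(\<Sum>j<n. f (nat \<bar>int i - int j\<bar>)) \<le> 2 * (\<Sum>k<n. f k)"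
proof -
  have "(\<Sum>j<n. f (nat \<bar>int i - int j\<bar>)) \<le> (\<Sum>j<n. (if j \<le> i then f (i - j) else 0) + (if i < j then f (j - i) else 0))"
    by (intro sum_mono) (auto simp: f nat_minus_as_int)
  also have "\<dots> = (\<Sum>j\<in>{j. j<n \<and> j \<le> i}. f (i - j)) + (\<Sum>j\<in>{j. j<n \<and> i < j}. f (j - i))"
    by (simp add: sum.distrib sum.If_cases Int_def conj_commute)
  also have "(\<Sum>j\<in>{j. j<n \<and> j \<le> i}. f (i - j)) = (\<Sum>k\<in>(\<lambda>j. i - j) ` {j. j<n \<and> j \<le> i}. f k)"
    by (subst sum.reindex) (auto simp: inj_on_def)
  also have "\<dots> \<le> (\<Sum>k<n. f k)"
    using i by (intro sum_mono2) (auto simp: f)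
  also have "(\<Sum>j\<in>{j. j<n \<and> i < j}. f (j - i)) = (\<Sum>k\<in>(\<lambda>j. j - i) ` {j. j<n \<and> i < j}. f k)"
    by (subst sum.reindex) (auto simp: inj_on_def)
  also have "\<dots> \<le> (\<Sum>k<n. f k)"
    by (intro sum_mono2) (auto simp: f)
  finally show ?thesis by simp
qed

lemma opn_toep_abs:
  "mat_opnorm n (toeplitz a) \<le> 2 * (\<Sum>k<n. \<bar>a k\<bar>)"
proof (rule opn_rowsum)
  show "0 \<le> 2 * (\<Sum>k<n. \<bar>a k\<bar>)" by (simp add: sum_nonneg)
  fix i assume "i < n"
  then show "(\<Sum>j<n. \<bar>toeplitz a i j\<bar>) \<le> 2 * (\<Sum>k<n. \<bar>a k\<bar>)"
    unfolding toeplitz_def by (intro toep_sum) auto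
next
  fix j assume "j < n"
  then have "(\<Sum>i<n. \<bar>a (nat \<bar>int j - int i\<bar>)\<bar>) \<le> 2 * (\<Sum>k<n. \<bar>a k\<bar>)"
    by (intro toep_sum) auto
  then show "(\<Sum>i<n. \<bar>toeplitz a i j\<bar>) \<le> 2 * (\<Sum>k<n. \<bar>a k\<bar>)"
    unfolding toeplitz_def by (simp add: abs_minus_commute)
qed



lemma interp:
  fixes F :: "nat \<Rightarrow> real"
  assumes mono: "\<And>n n'. n \<le> n' \<Longrightarrow> F n \<le> F n'" and c: "0 \<le> c"
    and ev: "eventually (\<lambda>j. F ((j+1)^2) \<le> c * real ((j+1)^2)) sequentially"
    and d: "0 < \<delta>"
  shows "eventually (\<lambda>n. F n \<le> (c + \<delta>) * real n) sequentially"
proof -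
  obtain J where J: "\<And>j. j \<ge> J \<Longrightarrow> F ((j+1)^2) \<le> c * real ((j+1)^2)"
    using ev unfolding eventually_sequentially by auto
  define N where "N = max (J^2 + 1) (nat \<lceil>(3*c/\<delta>)^2\<rceil> + 1)"
  show ?thesis unfolding eventually_sequentially
  proof (intro exI allI impI)
    fix n assume n: "N \<le> n"
    define j where "j = floor_sqrt (n - 1)"
    have j1: "j^2 \<le> n - 1" unfolding j_def by simp
    have j2: "n - 1 < (Suc j)^2" unfolding j_def by (rule Suc_floor_sqrt_power2_gt)
    have n1: "1 \<le> n" using n N_def by auto
    have nj: "n \<le> (j+1)^2" using j2 n1 by simp
    have jJ: "J \<le> j"
    proof (rule ccontr)
      assume "\<not> J \<le> j"
      then have "j + 1 \<le> J" by simp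
      then have p: "(j+1)^2 \<le> J^2" by (rule power_mono) simp
      have "J^2 + 1 \<le> N" unfolding N_def by simp
      then show False using p nj n by linarith
    qed
    have "F n \<le> F ((j+1)^2)" using mono nj by simp
    also have "\<dots> \<le> c * real ((j+1)^2)" using J jJ by simp
    also have "\<dots> \<le> (c + \<delta>) * real n"
    proof -
      have "j^2 \<le> n" using j1 by simp
      then have "real (j^2) \<le> real n" by (simp only: of_nat_le_iff)
      then have rn: "real j ^2 \<le> real n" by simp
      have sj: "real j \<le> sqrt (real n)" using rn real_le_rsqrt by blast
      have s1: "1 \<le> sqrt (real n)" using n1 by simp
      have "real ((j+1)^2) = real j^2 + 2 * real j + 1" by (simp add: power2_eq_square algebra_simps)
      also have "\<dots> \<le> real n + 3 * sqrt (real n)" using rn sj s1 by linarith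
      finally have A: "real ((j+1)^2) \<le> real n + 3 * sqrt (real n)" .
      have "nat \<lceil>(3*c/\<delta>)^2\<rceil> + 1 \<le> N" by (simp add: N_def)
      then have "nat \<lceil>(3*c/\<delta>)^2\<rceil> \<le> n" using n by linarith
      then have "real (nat \<lceil>(3*c/\<delta>)^2\<rceil>) \<le> real n" by (simp only: of_nat_le_iff)
      then have "(3*c/\<delta>)^2 \<le> real n" using real_nat_ceiling_ge[of "(3*c/\<delta>)^2"] by linarith
      then have "3*c/\<delta> \<le> sqrt (real n)" using real_le_rsqrt by blast
      then have "3*c \<le> \<delta> * sqrt (real n)" using d by (simp add: divide_le_eq mult.commute)
      then have "3*c * sqrt (real n) \<le> \<delta> * sqrt (real n) * sqrt (real n)"
        by (rule mult_right_mono) simp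
      moreover have "sqrt (real n) * sqrt (real n) = real n" by simp
      ultimately have B: "c * (3 * sqrt (real n)) \<le> \<delta> * real n" by (simp add: mult_ac)
      have "c * real ((j+1)^2) \<le> c * (real n + 3 * sqrt (real n))"
        using A c by (rule mult_left_mono)
      then show ?thesis using B by (simp add: algebra_simps)
    qed
    finally show "F n \<le> (c + \<delta>) * real n" .
  qed
qed


lemma frac4: fixes N d A :: real assumes "0 < N" "0 < d"
  shows "A * N^3 / (d^4 * N^4) = A / d^4 / N"
proof -
  have "N^4 = N^3 * N" by (simp add: power_Suc2[symmetric])
  then show ?thesis using assms by (simp add: divide_divide_eq_left mult_ac)
qed

lemma frac2: fixes N d A :: real assumes "0 < N" "0 < d"
  shows "N * A / (d^2 * N^2) = A / d^2 / N"
  using assms by (simp add: power2_eq_square divide_divide_eq_left mult_ac)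

lemma decomp:
  assumes x: "\<And>k. x k = \<mu> + w k + z k"
  shows "\<bar>mat_opnorm n (toeplitz x) - \<bar>m\<bar> * real n\<bar>
     \<le> mat_opnorm n (toeplitz w) + 2 * (\<Sum>k<n. \<bar>z k\<bar>) + \<bar>\<mu> - m\<bar> * real n"
proof -
  have T: "toeplitz x = (\<lambda>i j. (\<lambda>i j. \<mu>) i j + (\<lambda>i j. toeplitz w i j + toeplitz z i j) i j)"
    by (auto simp: toeplitz_def x fun_eq_iff)
  have C: "(\<lambda>i j. \<mu>) = (\<lambda>i j. toeplitz x i j + (\<lambda>i j. (\<lambda>i j. - toeplitz w i j) i j + (\<lambda>i j. - toeplitz z i j) i j) i j)"
    by (auto simp: toeplitz_def x fun_eq_iff)
  have a1: "mat_opnorm n (toeplitz x) \<le> \<bar>\<mu>\<bar> * real n + (mat_opnorm n (toeplitz w) + mat_opnorm n (toeplitz z))"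
    by (subst T, rule order_trans[OF opn_add], simp add: opn_const opn_add)
  have b1: "mat_opnorm n (\<lambda>i j. (\<lambda>i j. - toeplitz w i j) i j + (\<lambda>i j. - toeplitz z i j) i j)
      \<le> mat_opnorm n (toeplitz w) + mat_opnorm n (toeplitz z)"
    using opn_add[of n "\<lambda>i j. - toeplitz w i j" "\<lambda>i j. - toeplitz z i j"] by (simp only: opn_uminus)
  have "mat_opnorm n (\<lambda>i j. \<mu>) \<le> mat_opnorm n (toeplitz x) + mat_opnorm n (\<lambda>i j. (\<lambda>i j. - toeplitz w i j) i j + (\<lambda>i j. - toeplitz z i j) i j)"
    by (subst C, rule opn_add)
  then have "mat_opnorm n (\<lambda>i j. \<mu>) \<le> mat_opnorm n (toeplitz x) + (mat_opnorm n (toeplitz w) + mat_opnorm n (toeplitz z))"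
    using b1 by linarith
  then have a2: "\<bar>\<mu>\<bar> * real n \<le> mat_opnorm n (toeplitz x) + (mat_opnorm n (toeplitz w) + mat_opnorm n (toeplitz z))"
    by (simp add: opn_const)
  have tz: "mat_opnorm n (toeplitz z) \<le> 2 * (\<Sum>k<n. \<bar>z k\<bar>)" by (rule opn_toep_abs)
  have "\<bar>\<bar>\<mu>\<bar> * real n - \<bar>m\<bar> * real n\<bar> \<le> \<bar>\<mu> - m\<bar> * real n"
    by (simp add: left_diff_distrib[symmetric] abs_mult abs_triangle_ineq3 mult_right_mono)
  then show ?thesis using a1 a2 tz by linarith
qed

context prob_space
begin

lemma markov_bc:
  fixes H :: "nat \<Rightarrow> 'a \<Rightarrow> real"
  assumes int: "\<And>j. integrable M (H j)" and nn: "\<And>j \<omega>. \<omega> \<in> space M \<Longrightarrow> 0 \<le> H j \<omega>"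
    and t: "\<And>j. 0 < t j" and b: "\<And>j. expectation (H j) / t j \<le> C / (real j + 1)^2"
  shows "AE \<omega> in M. eventually (\<lambda>j. H j \<omega> < t j) sequentially"
proof -
  define A where "A j = {\<omega>\<in>space M. t j \<le> H j \<omega>}" for j
  have meas[measurable]: "H j \<in> borel_measurable M" for j using int by auto
  have As: "A j \<in> sets M" for j unfolding A_def by measurable
  have mA: "measure M (A j) \<le> C / (real j + 1)^2" for j
  proof -
    have "measure M (A j) \<le> expectation (H j) / t j"
      unfolding A_def
      by (rule integral_Markov_inequality_measure[where A="space M"]) (use int nn t in auto)
    then show ?thesis using b[of j] by linarith
  qed
  have sum: "summable (\<lambda>j. measure M (A j))"
  proof (rule summable_comparison_test[where g="\<lambda>j. \<bar>C\<bar> * inverse (real (Suc j) ^ 2)"])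
    show "\<exists>N. \<forall>n\<ge>N. norm (measure M (A n)) \<le> \<bar>C\<bar> * inverse (real (Suc n) ^ 2)"
    proof (intro exI allI impI)
      fix n
      have "C / (real n + 1)^2 \<le> \<bar>C\<bar> * inverse (real (Suc n) ^ 2)"
        by (simp add: divide_inverse add.commute mult_right_mono)
      then show "norm (measure M (A n)) \<le> \<bar>C\<bar> * inverse (real (Suc n) ^ 2)"
        using mA[of n] by simp
    qed
    have "summable (\<lambda>j. inverse (real j ^ 2))"
      using inverse_power_summable[of 2, where 'a=real] by simp
    then have "summable (\<lambda>j. inverse (real (Suc j) ^ 2))"
      by (subst summable_Suc_iff)
    then show "summable (\<lambda>j. \<bar>C\<bar> * inverse (real (Suc j) ^ 2))"
      by (rule summable_mult)
  qed
  have "AE \<omega> in M. eventually (\<lambda>j. \<omega> \<in> space M - A j) sequentially"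
    by (rule borel_cantelli_AE1[OF As _ sum]) (simp add: less_top[symmetric])
  then show ?thesis
  proof (rule AE_mp, intro AE_I2 impI)
    fix \<omega> assume w: "\<omega> \<in> space M" and ev: "eventually (\<lambda>j. \<omega> \<in> space M - A j) sequentially"
    show "eventually (\<lambda>j. H j \<omega> < t j) sequentially"
      using ev by (rule eventually_mono) (auto simp: A_def w)
  qed
qed

lemma indep_zero:
  fixes V :: "nat \<Rightarrow> 'a \<Rightarrow> real"
  assumes ind: "indep_vars (\<lambda>_. borel) V UNIV" and c: "c \<notin> B"
    and g: "g \<in> borel_measurable (PiM B (\<lambda>_. borel))"
    and iV: "integrable M (V c)" and e0: "expectation (V c) = 0"
    and ig: "integrable M (\<lambda>\<omega>. g (restrict (\<lambda>i. V i \<omega>) B))"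
  shows "expectation (\<lambda>\<omega>. V c \<omega> * g (restrict (\<lambda>i. V i \<omega>) B)) = 0"
proof -
  have iv: "indep_var (PiM {c} (\<lambda>_. borel)) (\<lambda>\<omega>. restrict (\<lambda>i. V i \<omega>) {c})
       (PiM B (\<lambda>_. borel)) (\<lambda>\<omega>. restrict (\<lambda>i. V i \<omega>) B)"
    using c by (intro indep_var_restrict[OF ind]) auto
  have "indep_var borel ((\<lambda>f. f c) \<circ> (\<lambda>\<omega>. restrict (\<lambda>i. V i \<omega>) {c}))
      borel (g \<circ> (\<lambda>\<omega>. restrict (\<lambda>i. V i \<omega>) B))"
    by (rule indep_var_compose[OF iv _ g]) (rule measurable_component_singleton, simp)
  then have iv2: "indep_var borel (V c) borel (\<lambda>\<omega>. g (restrict (\<lambda>i. V i \<omega>) B))"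
    by (simp add: comp_def)
  show ?thesis
    using indep_var_lebesgue_integral[OF iv2 iV ig] e0 by simp
qed

end

definition dd :: "nat \<Rightarrow> nat \<Rightarrow> nat" where "dd i j = nat \<bar>int i - int j\<bar>"

lemma cnt1: "(\<Sum>i'<n. of_bool (dd i' j = v) :: real) \<le> 2"
proof -
  have "{..<n} \<inter> {i'. dd i' j = v} \<subseteq> {j + v, j - v}" by (auto simp: dd_def)
  then have "card ({..<n} \<inter> {i'. dd i' j = v}) \<le> card {j + v, j - v}"
    by (intro card_mono) auto
  also have "\<dots> \<le> 2" by (simp add: card_insert_le_m1)
  finally show ?thesis by simp
qed

lemma cnt2: "(\<Sum>i'<n. of_bool (dd i' j = dd i' l) :: real) \<le> of_bool (j = l) * real n + 1"
proof (cases "j = l")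
  case True
  have "(\<Sum>i'<n. of_bool (dd i' j = dd i' l) :: real) \<le> (\<Sum>i'<n. 1)"
    by (intro sum_mono) auto
  then show ?thesis using True by simp
next
  case False
  have "{..<n} \<inter> {i'. dd i' j = dd i' l} \<subseteq> {(j + l) div 2}" using False by (auto simp: dd_def)
  then have "card ({..<n} \<inter> {i'. dd i' j = dd i' l}) \<le> card {(j + l) div 2}"
    by (intro card_mono) auto
  then show ?thesis using False by simp
qed

lemma cnt: "(\<Sum>j<n. \<Sum>l<n. \<Sum>i<n. \<Sum>i'<n. (of_bool (dd i' j = dd i j) + of_bool (dd i' j = dd i l)
     + of_bool (dd i' j = dd i' l) :: real)) \<le> 6 * real n ^ 3"
proof -
  have "(\<Sum>j<n. \<Sum>l<n. \<Sum>i<n. \<Sum>i'<n. (of_bool (dd i' j = dd i j) + of_bool (dd i' j = dd i l)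
     + of_bool (dd i' j = dd i' l) :: real)) \<le> (\<Sum>j<n. \<Sum>l<n. \<Sum>i<n. (5 + of_bool (j = l) * real n))"
  proof (intro sum_mono)
    fix j l i
    have "(\<Sum>i'<n. (of_bool (dd i' j = dd i j) + of_bool (dd i' j = dd i l)
     + of_bool (dd i' j = dd i' l) :: real)) = (\<Sum>i'<n. of_bool (dd i' j = dd i j) :: real)
       + (\<Sum>i'<n. of_bool (dd i' j = dd i l) :: real) + (\<Sum>i'<n. of_bool (dd i' j = dd i' l) :: real)"
      by (simp add: sum.distrib)
    also have "\<dots> \<le> 2 + 2 + (of_bool (j = l) * real n + 1)"
      using cnt1[where n=n and j=j and v="dd i j"] cnt1[where n=n and j=j and v="dd i l"] cnt2[where n=n and j=j and l=l] by linarith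
    finally show "(\<Sum>i'<n. (of_bool (dd i' j = dd i j) + of_bool (dd i' j = dd i l)
     + of_bool (dd i' j = dd i' l) :: real)) \<le> 5 + of_bool (j = l) * real n" by simp
  qed
  also have "\<dots> = (\<Sum>j<n. \<Sum>l<n. real n * 5 + of_bool (j = l) * (real n * real n))"
    by (simp add: algebra_simps)
  also have "\<dots> = (\<Sum>j<n. real n * real n * 5 + real n * real n)"
  proof (intro sum.cong refl)
    fix j assume j: "j \<in> {..<n}"
    have "(\<Sum>l<n. of_bool (j = l) * (real n * real n)) = real n * real n"
      using j by (simp add: sum.delta)
    then show "(\<Sum>l<n. real n * 5 + of_bool (j = l) * (real n * real n)) = real n * real n * 5 + real n * real n"
      by (simp add: sum.distrib)
  qed
  also have "\<dots> = 6 * real n ^ 3" by (simp add: power3_eq_cube algebra_simps)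
  finally show ?thesis .
qed

lemma GG_toep: "GG n (toeplitz a) = (\<Sum>j<n. \<Sum>l<n. \<Sum>i<n. \<Sum>i'<n.
    a (dd i j) * a (dd i l) * a (dd i' j) * a (dd i' l))"
  unfolding GG_def toeplitz_def dd_def
  by (simp add: power2_eq_square sum_product mult_ac)

context prob_space
begin

lemma four_zero:
  fixes W :: "nat \<Rightarrow> 'a \<Rightarrow> real"
  assumes ind: "indep_vars (\<lambda>_. borel) W UNIV" and bnd: "\<And>k \<omega>. \<omega> \<in> space M \<Longrightarrow> \<bar>W k \<omega>\<bar> \<le> \<beta>"
    and e0: "\<And>k. expectation (W k) = 0" and c: "c \<notin> {a, b, d}"
  shows "expectation (\<lambda>\<omega>. W a \<omega> * W b \<omega> * W c \<omega> * W d \<omega>) = 0"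
proof -
  have meas[measurable]: "W k \<in> borel_measurable M" for k using ind by (auto simp: indep_vars_def)
  define g where "g f = f a * f b * (f d :: real)" for f :: "nat \<Rightarrow> real"
  have gm: "g \<in> borel_measurable (PiM {a, b, d} (\<lambda>_. borel))" unfolding g_def by measurable
  have ig: "integrable M (\<lambda>\<omega>. g (restrict (\<lambda>i. W i \<omega>) {a, b, d}))"
    unfolding g_def
    by (rule integrable_const_bound[where B="\<beta> * \<beta> * \<beta>"])
       (auto intro!: AE_I2 mult_mono simp: abs_mult bnd intro: order_trans[OF abs_ge_zero bnd])
  have iW: "integrable M (W c)"
    by (rule integrable_const_bound[where B="\<beta>"]) (auto intro!: AE_I2 simp: bnd)
  have "expectation (\<lambda>\<omega>. W c \<omega> * g (restrict (\<lambda>i. W i \<omega>) {a, b, d})) = 0"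
    by (rule indep_zero[OF ind c gm iW e0 ig])
  then show ?thesis by (simp add: g_def mult_ac)
qed

lemma four_bound:
  fixes W :: "nat \<Rightarrow> 'a \<Rightarrow> real"
  assumes ind: "indep_vars (\<lambda>_. borel) W UNIV" and bnd: "\<And>k \<omega>. \<omega> \<in> space M \<Longrightarrow> \<bar>W k \<omega>\<bar> \<le> \<beta>"
  shows "integrable M (\<lambda>\<omega>. W a \<omega> * W b \<omega> * W c \<omega> * W d \<omega>)"
    and "expectation (\<lambda>\<omega>. W a \<omega> * W b \<omega> * W c \<omega> * W d \<omega>) \<le> \<beta>^4"
proof -
  have meas[measurable]: "W k \<in> borel_measurable M" for k using ind by (auto simp: indep_vars_def)
  have b: "\<bar>W a \<omega> * W b \<omega> * W c \<omega> * W d \<omega>\<bar> \<le> \<beta>^4" if "\<omega> \<in> space M" for \<omega>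
  proof -
    have "0 \<le> \<beta>" using bnd[OF that, of 0] by linarith
    then show ?thesis unfolding abs_mult power4_eq_xxxx
    using bnd[OF that] by (intro mult_mono) (auto intro: order_trans[OF abs_ge_zero bnd[OF that]])
  qed
  show i: "integrable M (\<lambda>\<omega>. W a \<omega> * W b \<omega> * W c \<omega> * W d \<omega>)"
    by (rule integrable_const_bound[where B="\<beta>^4"]) (auto intro!: AE_I2 simp: b)
  show "expectation (\<lambda>\<omega>. W a \<omega> * W b \<omega> * W c \<omega> * W d \<omega>) \<le> \<beta>^4"
    by (rule integral_le_const[OF i]) (auto intro!: AE_I2 dest: b)
qed

lemma EGG:
  fixes W :: "nat \<Rightarrow> 'a \<Rightarrow> real"
  assumes ind: "indep_vars (\<lambda>_. borel) W UNIV" and bnd: "\<And>k \<omega>. \<omega> \<in> space M \<Longrightarrow> \<bar>W k \<omega>\<bar> \<le> \<beta>"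
    and e0: "\<And>k. expectation (W k) = 0" and b0: "0 \<le> \<beta>"
  shows "integrable M (\<lambda>\<omega>. GG n (toeplitz (\<lambda>k. W k \<omega>)))"
    and "expectation (\<lambda>\<omega>. GG n (toeplitz (\<lambda>k. W k \<omega>))) \<le> 6 * \<beta>^4 * real n ^ 3"
proof -
  note fb = four_bound[OF ind bnd]
  show "integrable M (\<lambda>\<omega>. GG n (toeplitz (\<lambda>k. W k \<omega>)))"
    unfolding GG_toep by (intro Bochner_Integration.integrable_sum fb(1))
  have "expectation (\<lambda>\<omega>. GG n (toeplitz (\<lambda>k. W k \<omega>))) = (\<Sum>j<n. \<Sum>l<n. \<Sum>i<n. \<Sum>i'<n.
      expectation (\<lambda>\<omega>. W (dd i j) \<omega> * W (dd i l) \<omega> * W (dd i' j) \<omega> * W (dd i' l) \<omega>))"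
    unfolding GG_toep by (simp add: integral_sum fb)
  also have "\<dots> \<le> (\<Sum>j<n. \<Sum>l<n. \<Sum>i<n. \<Sum>i'<n. \<beta>^4 * (of_bool (dd i' j = dd i j) + of_bool (dd i' j = dd i l)
     + of_bool (dd i' j = dd i' l)))"
  proof (intro sum_mono)
    fix j l i i'
    show "expectation (\<lambda>\<omega>. W (dd i j) \<omega> * W (dd i l) \<omega> * W (dd i' j) \<omega> * W (dd i' l) \<omega>)
      \<le> \<beta>^4 * (of_bool (dd i' j = dd i j) + of_bool (dd i' j = dd i l) + of_bool (dd i' j = dd i' l))"
    proof (cases "dd i' j \<in> {dd i j, dd i l, dd i' l}")
      case True
      then have "1 \<le> (of_bool (dd i' j = dd i j) + of_bool (dd i' j = dd i l) + of_bool (dd i' j = dd i' l) :: real)"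
        by auto
      then have "\<beta>^4 * 1 \<le> \<beta>^4 * (of_bool (dd i' j = dd i j) + of_bool (dd i' j = dd i l) + of_bool (dd i' j = dd i' l))"
        using b0 by (intro mult_left_mono) auto
      then show ?thesis using fb(2)[of "dd i j" "dd i l" "dd i' j" "dd i' l"] by simp
    next
      case False
      then show ?thesis using four_zero[OF ind bnd e0 False] b0 by simp
    qed
  qed
  also have "\<dots> = \<beta>^4 * (\<Sum>j<n. \<Sum>l<n. \<Sum>i<n. \<Sum>i'<n. (of_bool (dd i' j = dd i j) + of_bool (dd i' j = dd i l)
     + of_bool (dd i' j = dd i' l) :: real))"
    by (simp add: sum_distrib_left)
  also have "\<dots> \<le> \<beta>^4 * (6 * real n ^ 3)"
    using b0 by (intro mult_left_mono cnt) auto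
  finally show "expectation (\<lambda>\<omega>. GG n (toeplitz (\<lambda>k. W k \<omega>))) \<le> 6 * \<beta>^4 * real n ^ 3" by simp
qed


lemma sqsum:
  fixes V :: "nat \<Rightarrow> 'a \<Rightarrow> real"
  assumes ind: "indep_vars (\<lambda>_. borel) V UNIV" and sq: "\<And>k. integrable M (\<lambda>\<omega>. (V k \<omega>)^2)"
    and e0: "\<And>k. expectation (V k) = 0" and es: "\<And>k. expectation (\<lambda>\<omega>. (V k \<omega>)^2) \<le> s"
  shows "integrable M (\<lambda>\<omega>. (\<Sum>k<N. V k \<omega>)^2)"
    and "expectation (\<lambda>\<omega>. (\<Sum>k<N. V k \<omega>)^2) \<le> real N * s"
proof -
  have meas[measurable]: "V k \<in> borel_measurable M" for k using ind by (auto simp: indep_vars_def)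
  have iV: "integrable M (V k)" for k
    by (rule square_integrable_imp_integrable[OF meas sq])
  have ip: "integrable M (\<lambda>\<omega>. V k \<omega> * V k' \<omega>)" for k k'
  proof (rule Bochner_Integration.integrable_bound[where f="\<lambda>\<omega>. (V k \<omega>)^2 + (V k' \<omega>)^2"])
    show "integrable M (\<lambda>\<omega>. (V k \<omega>)^2 + (V k' \<omega>)^2)" using sq by auto
    show "(\<lambda>\<omega>. V k \<omega> * V k' \<omega>) \<in> borel_measurable M" by measurable
    show "AE \<omega> in M. norm (V k \<omega> * V k' \<omega>) \<le> norm ((V k \<omega>)^2 + (V k' \<omega>)^2)"
    proof (intro AE_I2)
      fix \<omega>
      have "0 \<le> (\<bar>V k \<omega>\<bar> - \<bar>V k' \<omega>\<bar>)^2" by simp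
      then have "\<bar>V k \<omega> * V k' \<omega>\<bar> \<le> (V k \<omega>)^2 + (V k' \<omega>)^2"
        by (simp add: power2_eq_square abs_mult algebra_simps)
           (smt (verit) abs_ge_zero mult_nonneg_nonneg)
      then show "norm (V k \<omega> * V k' \<omega>) \<le> norm ((V k \<omega>)^2 + (V k' \<omega>)^2)" by simp
    qed
  qed
  have eq: "(\<lambda>\<omega>. (\<Sum>k<N. V k \<omega>)^2) = (\<lambda>\<omega>. \<Sum>k<N. \<Sum>k'<N. V k \<omega> * V k' \<omega>)"
    by (simp add: power2_eq_square sum_product)
  show "integrable M (\<lambda>\<omega>. (\<Sum>k<N. V k \<omega>)^2)"
    unfolding eq by (intro Bochner_Integration.integrable_sum ip)
  have "expectation (\<lambda>\<omega>. (\<Sum>k<N. V k \<omega>)^2) = (\<Sum>k<N. \<Sum>k'<N. expectation (\<lambda>\<omega>. V k \<omega> * V k' \<omega>))"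
    unfolding eq by (simp add: Bochner_Integration.integral_sum ip)
  also have "\<dots> \<le> (\<Sum>k<N. \<Sum>k'<N. (if k' = k then s else 0))"
  proof (intro sum_mono)
    fix k k'
    show "expectation (\<lambda>\<omega>. V k \<omega> * V k' \<omega>) \<le> (if k' = k then s else 0)"
    proof (cases "k' = k")
      case True then show ?thesis using es[of k] by (simp add: power2_eq_square)
    next
      case False
      have "expectation (\<lambda>\<omega>. V k \<omega> * (\<lambda>f. f k') (restrict (\<lambda>i. V i \<omega>) {k'})) = 0"
        by (rule indep_zero[OF ind _ _ iV e0]) (use False iV in auto)
      then show ?thesis using False by simp
    qed
  qed
  also have "\<dots> = real N * s" by (simp add: sum.delta)
  finally show "expectation (\<lambda>\<omega>. (\<Sum>k<N. V k \<omega>)^2) \<le> real N * s" .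
qed


lemma transfer:
  fixes X :: "nat \<Rightarrow> 'a \<Rightarrow> real"
  assumes distr: "\<And>i. distr M borel (X i) = distr M borel (X 0)"
    and meas: "\<And>i. X i \<in> borel_measurable M" and f: "f \<in> borel_measurable (borel :: real measure)"
  shows "integrable M (\<lambda>\<omega>. f (X k \<omega>) :: real) = integrable M (\<lambda>\<omega>. f (X 0 \<omega>))"
    and "expectation (\<lambda>\<omega>. f (X k \<omega>)) = expectation (\<lambda>\<omega>. f (X 0 \<omega>))"
proof -
  show "integrable M (\<lambda>\<omega>. f (X k \<omega>) :: real) = integrable M (\<lambda>\<omega>. f (X 0 \<omega>))"
    using integrable_distr_eq[OF meas[of k] f] integrable_distr_eq[OF meas[of 0] f] distr[of k] by simp
  show "expectation (\<lambda>\<omega>. f (X k \<omega>)) = expectation (\<lambda>\<omega>. f (X 0 \<omega>))"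
    using integral_distr[OF meas[of k] f] integral_distr[OF meas[of 0] f] distr[of k] by simp
qed


lemma trunc_AE:
  fixes X :: "nat \<Rightarrow> 'a \<Rightarrow> real" and K :: real
  assumes ind: "indep_vars (\<lambda>_. borel) X UNIV"
    and distr: "\<And>i. distr M borel (X i) = distr M borel (X 0)"
    and sq: "integrable M (\<lambda>\<omega>. (X 0 \<omega>)\<^sup>2)"
    and K: "0 < K"
  shows "AE \<omega> in M. \<forall>d::nat. eventually (\<lambda>n. \<bar>mat_opnorm n (toeplitz (\<lambda>k. X k \<omega>)) - \<bar>expectation (X 0)\<bar> * real n\<bar>
      \<le> (3 * expectation (\<lambda>\<omega>. (X 0 \<omega>)\<^sup>2) / K + 6 / real (Suc d)) * real n) sequentially"
proof -
  have meas[measurable]: "X i \<in> borel_measurable M" for i using ind by (auto simp: indep_vars_def)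
  define u where "u x = (if \<bar>x\<bar> \<le> K then x else 0)" for x :: real
  have um[measurable]: "u \<in> borel_measurable borel" unfolding u_def by measurable
  have ub: "\<bar>u x\<bar> \<le> K" for x unfolding u_def using K by auto
  define s where "s = expectation (\<lambda>\<omega>. (X 0 \<omega>)\<^sup>2)"
  define m where "m = expectation (X 0)"
  define \<mu> where "\<mu> = expectation (\<lambda>\<omega>. u (X 0 \<omega>))"
  define e where "e = expectation (\<lambda>\<omega>. \<bar>X 0 \<omega> - u (X 0 \<omega>)\<bar>)"
  have iX0: "integrable M (X 0)" by (rule square_integrable_imp_integrable[OF meas sq])
  have iu: "integrable M (\<lambda>\<omega>. u (X k \<omega>))" for k
    by (rule integrable_const_bound[where B=K]) (auto simp: ub)
  have \<mu>b: "\<bar>\<mu>\<bar> \<le> K"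
  proof -
    have "\<bar>\<mu>\<bar> \<le> expectation (\<lambda>\<omega>. \<bar>u (X 0 \<omega>)\<bar>)" unfolding \<mu>_def by (rule integral_abs_bound)
    also have "\<dots> \<le> K" by (rule integral_le_const) (auto simp: ub iu)
    finally show ?thesis .
  qed
  have iz: "integrable M (\<lambda>\<omega>. \<bar>X 0 \<omega> - u (X 0 \<omega>)\<bar>)"
    by (rule Bochner_Integration.integrable_bound[OF iX0]) (auto simp: u_def)
  have iz2: "integrable M (\<lambda>\<omega>. (\<bar>X 0 \<omega> - u (X 0 \<omega>)\<bar>)\<^sup>2)"
    by (rule Bochner_Integration.integrable_bound[OF sq]) (auto simp: u_def)
  have e0: "0 \<le> e" unfolding e_def by (rule integral_nonneg_AE) simp
  have es: "e \<le> s / K"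
  proof -
    have "e \<le> expectation (\<lambda>\<omega>. (X 0 \<omega>)\<^sup>2 / K)" unfolding e_def
    proof (rule integral_mono[OF iz])
      show "integrable M (\<lambda>\<omega>. (X 0 \<omega>)\<^sup>2 / K)" using sq by simp
      fix \<omega>
      show "\<bar>X 0 \<omega> - u (X 0 \<omega>)\<bar> \<le> (X 0 \<omega>)\<^sup>2 / K"
      proof (cases "\<bar>X 0 \<omega>\<bar> \<le> K")
        case True then show ?thesis by (simp add: u_def)
      next
        case False
        then have "\<bar>X 0 \<omega>\<bar> * K \<le> \<bar>X 0 \<omega>\<bar> * \<bar>X 0 \<omega>\<bar>" by (intro mult_left_mono) auto
        then show ?thesis using False K by (simp add: u_def le_divide_eq power2_eq_square abs_mult_self_eq)
      qed
    qed
    then show ?thesis by (simp add: s_def)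
  qed
  have \<mu>m: "\<bar>\<mu> - m\<bar> \<le> e"
  proof -
    have "m - \<mu> = expectation (\<lambda>\<omega>. X 0 \<omega> - u (X 0 \<omega>))"
      unfolding m_def \<mu>_def by (simp add: Bochner_Integration.integral_diff[OF iX0 iu])
    also have "\<bar>\<dots>\<bar> \<le> e" unfolding e_def by (rule integral_abs_bound)
    finally show ?thesis by simp
  qed
  define W where "W k \<omega> = u (X k \<omega>) - \<mu>" for k \<omega>
  have Wm[measurable]: "W k \<in> borel_measurable M" for k unfolding W_def by measurable
  have indW: "indep_vars (\<lambda>_. borel) W UNIV"
    unfolding W_def by (rule indep_vars_compose2[OF ind]) measurable
  have bndW: "\<bar>W k \<omega>\<bar> \<le> 2 * K" for k \<omega>
    using ub[of "X k \<omega>"] \<mu>b unfolding W_def by linarith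
  have e0W: "expectation (W k) = 0" for k
  proof -
    have "expectation (W k) = expectation (\<lambda>\<omega>. u (X 0 \<omega>) - \<mu>)"
      unfolding W_def by (rule transfer(2)[where X=X and f="\<lambda>x. u x - \<mu>", OF distr meas]) measurable
    also have "\<dots> = 0" by (simp add: Bochner_Integration.integral_diff[OF iu] \<mu>_def prob_space)
    finally show ?thesis .
  qed
  have AEW: "AE \<omega> in M. eventually (\<lambda>n. mat_opnorm n (toeplitz (\<lambda>k. W k \<omega>)) \<le> (\<delta> + \<delta>) * real n) sequentially"
    if d: "0 < \<delta>" for \<delta> :: real
  proof -
    let ?N = "\<lambda>j::nat. real ((j+1)^2)"
    have b0: "0 \<le> 2 * K" using K by simp
    have "AE \<omega> in M. eventually (\<lambda>j. GG ((j+1)^2) (toeplitz (\<lambda>k. W k \<omega>)) < \<delta>^4 * ?N j ^ 4) sequentially"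
    proof (rule markov_bc[where C="6 * (2*K)^4 / \<delta>^4"])
      fix j
      show "integrable M (\<lambda>\<omega>. GG ((j+1)^2) (toeplitz (\<lambda>k. W k \<omega>)))"
        by (rule EGG(1)[OF indW _ e0W b0]) (simp add: bndW)
      show "0 \<le> GG ((j+1)^2) (toeplitz (\<lambda>k. W k \<omega>))" for \<omega> by (rule GG_nonneg)
      have Np: "0 < ?N j" by simp
      then show "0 < \<delta>^4 * ?N j ^ 4" using d by simp
      have "expectation (\<lambda>\<omega>. GG ((j+1)^2) (toeplitz (\<lambda>k. W k \<omega>))) \<le> 6 * (2*K)^4 * ?N j ^ 3"
        using EGG(2)[OF indW _ e0W b0, of "(j+1)^2"] bndW by simp
      then have "expectation (\<lambda>\<omega>. GG ((j+1)^2) (toeplitz (\<lambda>k. W k \<omega>))) / (\<delta>^4 * ?N j ^ 4)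
          \<le> 6 * (2*K)^4 * ?N j ^ 3 / (\<delta>^4 * ?N j ^ 4)"
        using Np d by (intro divide_right_mono) auto
      also have "\<dots> = 6 * (2*K)^4 / \<delta>^4 / ?N j" using Np d by (rule frac4)
      finally have r: "expectation (\<lambda>\<omega>. GG ((j+1)^2) (toeplitz (\<lambda>k. W k \<omega>))) / (\<delta>^4 * ?N j ^ 4)
          \<le> 6 * (2*K)^4 / \<delta>^4 / ?N j" .
      show "expectation (\<lambda>\<omega>. GG ((j+1)^2) (toeplitz (\<lambda>k. W k \<omega>))) / (\<delta>^4 * ?N j ^ 4)
          \<le> 6 * (2*K)^4 / \<delta>^4 / (real j + 1)^2" using r by (simp add: add.commute)
    qed
    then show ?thesis
    proof (rule AE_mp, intro AE_I2 impI)
      fix \<omega> assume ev: "eventually (\<lambda>j. GG ((j+1)^2) (toeplitz (\<lambda>k. W k \<omega>)) < \<delta>^4 * ?N j ^ 4) sequentially"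
      have ev2: "eventually (\<lambda>j. mat_opnorm ((j+1)^2) (toeplitz (\<lambda>k. W k \<omega>)) \<le> \<delta> * real ((j+1)^2)) sequentially"
        using ev
      proof (rule eventually_mono)
        fix j assume "GG ((j+1)^2) (toeplitz (\<lambda>k. W k \<omega>)) < \<delta>^4 * ?N j ^ 4"
        then show "mat_opnorm ((j+1)^2) (toeplitz (\<lambda>k. W k \<omega>)) \<le> \<delta> * real ((j+1)^2)"
          using d by (intro opn_GG) (auto simp: power_mult_distrib)
      qed
      show "eventually (\<lambda>n. mat_opnorm n (toeplitz (\<lambda>k. W k \<omega>)) \<le> (\<delta> + \<delta>) * real n) sequentially"
        by (rule interp[where F="\<lambda>n. mat_opnorm n (toeplitz (\<lambda>k. W k \<omega>))", OF _ _ ev2 d])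
           (use d opn_mono in auto)
    qed
  qed
  define Z where "Z k \<omega> = \<bar>X k \<omega> - u (X k \<omega>)\<bar>" for k \<omega>
  define V where "V k \<omega> = Z k \<omega> - e" for k \<omega>
  have Zm[measurable]: "Z k \<in> borel_measurable M" for k unfolding Z_def by measurable
  have Vm[measurable]: "V k \<in> borel_measurable M" for k unfolding V_def by measurable
  have indV: "indep_vars (\<lambda>_. borel) V UNIV"
    unfolding V_def Z_def by (rule indep_vars_compose2[OF ind]) measurable
  have sqV0: "integrable M (\<lambda>\<omega>. (\<bar>X 0 \<omega> - u (X 0 \<omega>)\<bar> - e)^2)"
  proof (rule Bochner_Integration.integrable_bound[where f="\<lambda>\<omega>. 2 * (X 0 \<omega>)^2 + 2 * e^2"])
    show "integrable M (\<lambda>\<omega>. 2 * (X 0 \<omega>)^2 + 2 * e^2)" using sq by simp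
    show "(\<lambda>\<omega>. (\<bar>X 0 \<omega> - u (X 0 \<omega>)\<bar> - e)^2) \<in> borel_measurable M" by measurable
    show "AE \<omega> in M. norm ((\<bar>X 0 \<omega> - u (X 0 \<omega>)\<bar> - e)^2) \<le> norm (2 * (X 0 \<omega>)^2 + 2 * e^2)"
    proof (intro AE_I2)
      fix \<omega>
      define a where "a = \<bar>X 0 \<omega> - u (X 0 \<omega>)\<bar>"
      have a: "a^2 \<le> (X 0 \<omega>)^2" unfolding a_def u_def by auto
      have "(a - e)^2 \<le> 2 * a^2 + 2 * e^2"
        using sum_squares_ge_zero[of "a + e" 0] by (simp add: power2_eq_square algebra_simps)
      then show "norm ((\<bar>X 0 \<omega> - u (X 0 \<omega>)\<bar> - e)^2) \<le> norm (2 * (X 0 \<omega>)^2 + 2 * e^2)"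
        using a unfolding a_def by simp
    qed
  qed
  have sqV: "integrable M (\<lambda>\<omega>. (V k \<omega>)^2)" for k
    unfolding V_def Z_def
    using transfer(1)[where X=X and f="\<lambda>x. (\<bar>x - u x\<bar> - e)^2", OF distr meas] sqV0 by simp
  have e0V: "expectation (V k) = 0" for k
  proof -
    have "expectation (V k) = expectation (\<lambda>\<omega>. \<bar>X 0 \<omega> - u (X 0 \<omega>)\<bar> - e)"
      unfolding V_def Z_def by (rule transfer(2)[where X=X and f="\<lambda>x. \<bar>x - u x\<bar> - e", OF distr meas]) measurable
    also have "\<dots> = 0" by (simp add: Bochner_Integration.integral_diff[OF iz] e_def prob_space)
    finally show ?thesis .
  qed
  have esV: "expectation (\<lambda>\<omega>. (V k \<omega>)^2) \<le> s" for k
  proof -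
    have "expectation (\<lambda>\<omega>. (V k \<omega>)^2) = expectation (\<lambda>\<omega>. (\<bar>X 0 \<omega> - u (X 0 \<omega>)\<bar> - e)^2)"
      unfolding V_def Z_def by (rule transfer(2)[where X=X and f="\<lambda>x. (\<bar>x - u x\<bar> - e)^2", OF distr meas]) measurable
    also have "\<dots> = expectation (\<lambda>\<omega>. (\<bar>X 0 \<omega> - u (X 0 \<omega>)\<bar>)^2 - (2 * e * \<bar>X 0 \<omega> - u (X 0 \<omega>)\<bar> - e^2))"
      by (simp add: power2_eq_square algebra_simps)
    also have "\<dots> = expectation (\<lambda>\<omega>. (\<bar>X 0 \<omega> - u (X 0 \<omega>)\<bar>)^2) - (2 * e * e - e^2)"
      using iz iz2 by (simp add: Bochner_Integration.integral_diff e_def prob_space)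
    also have "\<dots> \<le> expectation (\<lambda>\<omega>. (\<bar>X 0 \<omega> - u (X 0 \<omega>)\<bar>)^2)"
      by (simp add: power2_eq_square)
    also have "\<dots> \<le> s" unfolding s_def
      by (rule integral_mono[OF iz2 sq]) (auto simp: u_def)
    finally show ?thesis .
  qed
  have AEV: "AE \<omega> in M. eventually (\<lambda>n. (\<Sum>k<n. Z k \<omega>) \<le> (e + \<delta> + \<delta>) * real n) sequentially"
    if d: "0 < \<delta>" for \<delta> :: real
  proof -
    let ?N = "\<lambda>j::nat. real ((j+1)^2)"
    have "AE \<omega> in M. eventually (\<lambda>j. (\<Sum>k<(j+1)^2. V k \<omega>)^2 < \<delta>^2 * ?N j ^ 2) sequentially"
    proof (rule markov_bc[where C="s / \<delta>^2"])
      fix j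
      show "integrable M (\<lambda>\<omega>. (\<Sum>k<(j+1)^2. V k \<omega>)^2)"
        by (rule sqsum(1)[OF indV sqV e0V esV])
      show "0 \<le> (\<Sum>k<(j+1)^2. V k \<omega>)^2" for \<omega> by simp
      have Np: "0 < ?N j" by simp
      then show "0 < \<delta>^2 * ?N j ^ 2" using d by simp
      have "expectation (\<lambda>\<omega>. (\<Sum>k<(j+1)^2. V k \<omega>)^2) \<le> ?N j * s"
        by (rule sqsum(2)[OF indV sqV e0V esV])
      then have "expectation (\<lambda>\<omega>. (\<Sum>k<(j+1)^2. V k \<omega>)^2) / (\<delta>^2 * ?N j ^ 2)
          \<le> ?N j * s / (\<delta>^2 * ?N j ^ 2)"
        using Np d by (intro divide_right_mono) auto
      also have "\<dots> = s / \<delta>^2 / ?N j" using Np d by (rule frac2)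
      finally have r: "expectation (\<lambda>\<omega>. (\<Sum>k<(j+1)^2. V k \<omega>)^2) / (\<delta>^2 * ?N j ^ 2)
          \<le> s / \<delta>^2 / ?N j" .
      show "expectation (\<lambda>\<omega>. (\<Sum>k<(j+1)^2. V k \<omega>)^2) / (\<delta>^2 * ?N j ^ 2)
          \<le> s / \<delta>^2 / (real j + 1)^2" using r by (simp add: add.commute)
    qed
    then show ?thesis
    proof (rule AE_mp, intro AE_I2 impI)
      fix \<omega> assume ev: "eventually (\<lambda>j. (\<Sum>k<(j+1)^2. V k \<omega>)^2 < \<delta>^2 * ?N j ^ 2) sequentially"
      have ev2: "eventually (\<lambda>j. (\<Sum>k<(j+1)^2. Z k \<omega>) \<le> (e + \<delta>) * real ((j+1)^2)) sequentially"
        using ev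
      proof (rule eventually_mono)
        fix j assume a: "(\<Sum>k<(j+1)^2. V k \<omega>)^2 < \<delta>^2 * ?N j ^ 2"
        have "(\<Sum>k<(j+1)^2. V k \<omega>)^2 < (\<delta> * ?N j)^2" using a by (simp add: power_mult_distrib)
        then have "(\<Sum>k<(j+1)^2. V k \<omega>) < \<delta> * ?N j"
          by (rule power_less_imp_less_base) (use d in simp)
        moreover have "(\<Sum>k<(j+1)^2. V k \<omega>) = (\<Sum>k<(j+1)^2. Z k \<omega>) - ?N j * e"
          unfolding V_def by (simp add: sum_subtractf)
        ultimately show "(\<Sum>k<(j+1)^2. Z k \<omega>) \<le> (e + \<delta>) * real ((j+1)^2)"
          by (simp add: algebra_simps)
      qed
      show "eventually (\<lambda>n. (\<Sum>k<n. Z k \<omega>) \<le> (e + \<delta> + \<delta>) * real n) sequentially"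
        by (rule interp[where F="\<lambda>n. (\<Sum>k<n. Z k \<omega>)", OF _ _ ev2 d])
           (use d e0 in \<open>auto intro!: sum_mono2 simp: Z_def\<close>)
    qed
  qed
  have "AE \<omega> in M. eventually (\<lambda>n. \<bar>mat_opnorm n (toeplitz (\<lambda>k. X k \<omega>)) - \<bar>m\<bar> * real n\<bar>
      \<le> (3 * s / K + 6 / real (Suc d)) * real n) sequentially" for d :: nat
  proof -
    define \<delta> where "\<delta> = 1 / real (Suc d)"
    have d: "0 < \<delta>" unfolding \<delta>_def by simp
    have "AE \<omega> in M. eventually (\<lambda>n. mat_opnorm n (toeplitz (\<lambda>k. W k \<omega>)) \<le> (\<delta> + \<delta>) * real n) sequentially
       \<and> eventually (\<lambda>n. (\<Sum>k<n. Z k \<omega>) \<le> (e + \<delta> + \<delta>) * real n) sequentially"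
      using AEW[OF d] AEV[OF d] by (auto elim: AE_mp intro!: AE_I2)
    then show ?thesis
    proof (rule AE_mp, intro AE_I2 impI)
      fix \<omega> assume "eventually (\<lambda>n. mat_opnorm n (toeplitz (\<lambda>k. W k \<omega>)) \<le> (\<delta> + \<delta>) * real n) sequentially
       \<and> eventually (\<lambda>n. (\<Sum>k<n. Z k \<omega>) \<le> (e + \<delta> + \<delta>) * real n) sequentially"
      then have "eventually (\<lambda>n. mat_opnorm n (toeplitz (\<lambda>k. W k \<omega>)) \<le> (\<delta> + \<delta>) * real n
        \<and> (\<Sum>k<n. Z k \<omega>) \<le> (e + \<delta> + \<delta>) * real n) sequentially"
        by (simp add: eventually_conj_iff)
      then show "eventually (\<lambda>n. \<bar>mat_opnorm n (toeplitz (\<lambda>k. X k \<omega>)) - \<bar>m\<bar> * real n\<bar>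
          \<le> (3 * s / K + 6 / real (Suc d)) * real n) sequentially"
      proof (rule eventually_mono)
        fix n assume h: "mat_opnorm n (toeplitz (\<lambda>k. W k \<omega>)) \<le> (\<delta> + \<delta>) * real n
          \<and> (\<Sum>k<n. Z k \<omega>) \<le> (e + \<delta> + \<delta>) * real n"
        have dc: "\<bar>mat_opnorm n (toeplitz (\<lambda>k. X k \<omega>)) - \<bar>m\<bar> * real n\<bar>
          \<le> mat_opnorm n (toeplitz (\<lambda>k. W k \<omega>)) + 2 * (\<Sum>k<n. \<bar>X k \<omega> - u (X k \<omega>)\<bar>) + \<bar>\<mu> - m\<bar> * real n"
          by (rule decomp) (simp add: W_def)
        have "\<bar>\<mu> - m\<bar> * real n \<le> e * real n" using \<mu>m by (simp add: mult_right_mono)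
        moreover have "e * real n \<le> s / K * real n" using es by (rule mult_right_mono) simp
        moreover have "(3 * s / K + 6 / real (Suc d)) * real n = 3 * (s / K * real n) + 6 * (\<delta> * real n)"
          unfolding \<delta>_def by (simp add: algebra_simps)
        moreover have "(\<delta> + \<delta>) * real n = 2 * (\<delta> * real n)" "(e + \<delta> + \<delta>) * real n = e * real n + 2 * (\<delta> * real n)"
          by (simp_all add: algebra_simps)
        ultimately show "\<bar>mat_opnorm n (toeplitz (\<lambda>k. X k \<omega>)) - \<bar>m\<bar> * real n\<bar>
          \<le> (3 * s / K + 6 / real (Suc d)) * real n"
          using dc h[THEN conjunct1] h[THEN conjunct2] unfolding Z_def by linarith
      qed
    qed
  qed
  then show ?thesis unfolding m_def s_def by (subst AE_all_countable) blast
qed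

end


theorem mainTheorem7:
  fixes M :: "'a measure" and X :: "nat \<Rightarrow> 'a \<Rightarrow> real" and m :: real
  assumes "prob_space M"
    and "prob_space.indep_vars M (\<lambda>_. borel) X UNIV"
    and "\<And>i. distr M borel (X i) = distr M borel (X 0)"
    and "integrable M (\<lambda>\<omega>. (X 0 \<omega>)\<^sup>2)"
    and "prob_space.expectation M (X 0) = m"
  shows "AE \<omega> in M. (\<lambda>n. mat_opnorm n (toeplitz (\<lambda>k. X k \<omega>)) / real n) \<longlonglongrightarrow> \<bar>m\<bar>"
proof -
  interpret prob_space M by fact
  define s where "s = expectation (\<lambda>\<omega>. (X 0 \<omega>)\<^sup>2)"
  have s0: "0 \<le> s" unfolding s_def by (rule integral_nonneg_AE) simp
  have "AE \<omega> in M. \<forall>k::nat. \<forall>d::nat. eventually (\<lambda>n. \<bar>mat_opnorm n (toeplitz (\<lambda>k. X k \<omega>)) - \<bar>m\<bar> * real n\<bar>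
      \<le> (3 * s / real (Suc k) + 6 / real (Suc d)) * real n) sequentially"
  proof (subst AE_all_countable, intro allI)
    fix k :: nat
    show "AE \<omega> in M. \<forall>d::nat. eventually (\<lambda>n. \<bar>mat_opnorm n (toeplitz (\<lambda>k. X k \<omega>)) - \<bar>m\<bar> * real n\<bar>
      \<le> (3 * s / real (Suc k) + 6 / real (Suc d)) * real n) sequentially"
      using trunc_AE[OF assms(2,3,4), of "real (Suc k)"] assms(5) unfolding s_def by simp
  qed
  then show ?thesis
  proof (rule AE_mp, intro AE_I2 impI)
    fix \<omega> assume H: "\<forall>k::nat. \<forall>d::nat. eventually (\<lambda>n. \<bar>mat_opnorm n (toeplitz (\<lambda>k. X k \<omega>)) - \<bar>m\<bar> * real n\<bar>
      \<le> (3 * s / real (Suc k) + 6 / real (Suc d)) * real n) sequentially"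
    show "(\<lambda>n. mat_opnorm n (toeplitz (\<lambda>k. X k \<omega>)) / real n) \<longlonglongrightarrow> \<bar>m\<bar>"
    proof (rule LIMSEQ_I)
      fix r :: real assume r: "0 < r"
      obtain k :: nat where k: "6 * s / r < real k" using reals_Archimedean2 by blast
      obtain d :: nat where d: "12 / r < real d" using reals_Archimedean2 by blast
      have b1: "3 * s / real (Suc k) < r / 2"
      proof -
        have "6 * s < r * real k" using k r by (simp add: divide_less_eq mult.commute)
        also have "\<dots> \<le> r * real (Suc k)" using r by simp
        finally have "6 * s < r * real (Suc k)" .
        then show ?thesis by (simp add: divide_less_eq field_simps)
      qed
      have b2: "6 / real (Suc d) < r / 2"
      proof -
        have "12 < r * real d" using d r by (simp add: divide_less_eq mult.commute)
        also have "\<dots> \<le> r * real (Suc d)" using r by simp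
        finally have "12 < r * real (Suc d)" .
        then show ?thesis by (simp add: divide_less_eq field_simps)
      qed
      obtain N where N: "\<And>n. n \<ge> N \<Longrightarrow> \<bar>mat_opnorm n (toeplitz (\<lambda>k. X k \<omega>)) - \<bar>m\<bar> * real n\<bar>
          \<le> (3 * s / real (Suc k) + 6 / real (Suc d)) * real n"
        using H unfolding eventually_sequentially by blast
      show "\<exists>no. \<forall>n\<ge>no. norm (mat_opnorm n (toeplitz (\<lambda>k. X k \<omega>)) / real n - \<bar>m\<bar>) < r"
      proof (intro exI allI impI)
        fix n assume n: "max N 1 \<le> n"
        then have np: "0 < real n" by simp
        have "norm (mat_opnorm n (toeplitz (\<lambda>k. X k \<omega>)) / real n - \<bar>m\<bar>)
            = \<bar>mat_opnorm n (toeplitz (\<lambda>k. X k \<omega>)) - \<bar>m\<bar> * real n\<bar> / real n"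
          using np by (simp add: field_simps)
        also have "\<dots> \<le> (3 * s / real (Suc k) + 6 / real (Suc d))"
          using N[of n] n np by (simp add: divide_le_eq)
        also have "\<dots> < r" using b1 b2 by linarith
        finally show "norm (mat_opnorm n (toeplitz (\<lambda>k. X k \<omega>)) / real n - \<bar>m\<bar>) < r" .
      qed
    qed
  qed
qed

end
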